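(* Let $s,r,t,\ell,m$ be integers with $1 \le s \le r \le \ell \le m$ and $1 \le t < \ell$. Then $$\hat{w}_r(t;\ell,m)-\hat{w}_s(t;\ell,m)=q^t\bigl(\hat{\mathfrak w}_{r-1}(t;\ell-1,m-1)-\hat{\mathfrak w}_{s-1}(t;\ell-1,m-1)\bigr).$$ In particular $\hat{w}_r(t;\ell,m)-\hat{w}_1(t;\ell,m)=q^t\,\hat{\mathfrak w}_{r-1}(t;\ell-1,m-1)$.
   Context: $q$ is a prime power. For an $a\times b$ matrix $M=(m_{ij})$ and $0\le r\le a$, $\tau_r(M)=m_{11}+\cdots+m_{rr}$ ($\tau_0=0$). $\mathfrak w_r(t;a,b)$ is the number of $a\times b$ matrices over $\mathbb{F}_q$ of rank exactly $t$ with $\tau_r(M)\ne0$, and $\hat{\mathfrak w}_r(t;a,b)=\mathfrak w_r(t;a,b)/(q-1)$. Also $\hat{w}_r(t;\ell,m)=\sum_{s=1}^t\hat{\mathfrak w}_r(s;\ell,m)$, i.e. $\frac{1}{q-1}$ times the number of $\ell\times m$ matrices $M$ over $\mathbb{F}_q$ with $1\le\mathrm{rk}(M)\le t$ and $\tau_r(M)\ne 0$. *)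

theory Defs
  imports "Jordan_Normal_Form.DL_Rank"
begin

text \<open>Matrices over the finite field 'a (of order q = CARD('a)) are JNF matrices;
  indices are 0-based, so the paper's m_11,...,m_rr are M $$ (0,0),...,M $$ (r-1,r-1).\<close>

definition tau :: "nat \<Rightarrow> 'a::field mat \<Rightarrow> 'a" where
  "tau r M = (\<Sum>i<r. M $$ (i, i))"

definition mat_rank :: "'a::field mat \<Rightarrow> nat" where
  "mat_rank M = vec_space.rank (dim_row M) M"

definition frak_w :: "'a::{finite,field} itself \<Rightarrow> nat \<Rightarrow> nat \<Rightarrow> nat \<Rightarrow> nat \<Rightarrow> nat" where
  "frak_w ty r t a b =
     card {M :: 'a mat. M \<in> carrier_mat a b \<and> mat_rank M = t \<and> tau r M \<noteq> 0}"

definition frak_w_hat :: "'a::{finite,field} itself \<Rightarrow> nat \<Rightarrow> nat \<Rightarrow> nat \<Rightarrow> nat \<Rightarrow> real" where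
  "frak_w_hat ty r t a b = real (frak_w ty r t a b) / (real (card (UNIV :: 'a set)) - 1)"

definition w_hat :: "'a::{finite,field} itself \<Rightarrow> nat \<Rightarrow> nat \<Rightarrow> nat \<Rightarrow> nat \<Rightarrow> real" where
  "w_hat ty r t l m = (\<Sum>s = 1..t. frak_w_hat ty r s l m)"

end

theory Submission
  imports Defs "Berlekamp_Zassenhaus.Berlekamp_Type_Based"
begin

definition colsp :: "'a::field mat \<Rightarrow> 'a vec set" where
  "colsp M = (\<lambda>x. M *\<^sub>v x) ` carrier_vec (dim_col M)"

lemma (in vec_space) span_cols_eq_colsp:
  assumes "M \<in> carrier_mat n k"
  shows "span (set (cols M)) = colsp M"
  using col_space_eq[OF assms] assms unfolding col_space_def colsp_def by auto

lemma card_colsp_indpt: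
  fixes ws :: "'a::{finite,field} vec list"
  assumes ws: "set ws \<subseteq> carrier_vec n" and d: "distinct ws"
    and li: "\<not> module.lin_dep class_ring (module_vec TYPE('a) n) (set ws)"
  shows "card (colsp (mat_of_cols n ws)) = CARD('a) ^ length ws"
proof -
  interpret V: vec_space "TYPE('a)" n .
  let ?A = "mat_of_cols n ws"
  have A: "?A \<in> carrier_mat n (length ws)" by simp
  have cA: "cols ?A = ws" using ws by simp
  have inj: "inj_on (\<lambda>x. ?A *\<^sub>v x) (carrier_vec (length ws))"
  proof (rule inj_onI, rule ccontr)
    fix x y assume x: "x \<in> carrier_vec (length ws)" and y: "y \<in> carrier_vec (length ws)"
      and eq: "?A *\<^sub>v x = ?A *\<^sub>v y" and ne: "x \<noteq> y"
    have "?A *\<^sub>v (x - y) = ?A *\<^sub>v x - ?A *\<^sub>v y"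
      using x y A by (metis mult_minus_distrib_mat_vec)
    also have "\<dots> = 0\<^sub>v n" using eq A y by (metis minus_cancel_vec mult_mat_vec_carrier)
    finally have z: "?A *\<^sub>v (x - y) = 0\<^sub>v n" .
    have "x - y \<noteq> 0\<^sub>v (length ws)"
    proof
      assume "x - y = 0\<^sub>v (length ws)"
      note h = this
      have "x = y"
      proof (rule eq_vecI)
        fix i assume i: "i < dim_vec y"
        then have "(x - y) $ i = 0" using h y by simp
        then show "x $ i = y $ i" using i x y by simp
      qed (use x y in auto)
      with ne show False by simp
    qed
    then have "V.lin_dep (set (cols ?A))"
      using V.lin_depI[OF A _ _ z] x y d cA by auto
    with li cA show False by simp
  qed
  have "card (colsp ?A) = card (carrier_vec (length ws) :: 'a vec set)"
    unfolding colsp_def using inj card_image by (metis A carrier_matD(2))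
  also have "\<dots> = CARD('a) ^ length ws" by (rule card_carrier_vec)
  finally show ?thesis .
qed

lemma card_colsp_rank:
  fixes M :: "'a::{finite,field} mat"
  assumes M: "M \<in> carrier_mat n k"
  shows "card (colsp M) = CARD('a) ^ mat_rank M"
proof -
  interpret V: vec_space "TYPE('a)" n .
  have cs: "set (cols M) \<subseteq> carrier_vec n" using M cols_dim by blast
  have li0: "V.lin_indpt {}"
    by (metis (no_types) empty_subsetI V.fin_dim V.finite_basis_exists V.subset_li_is_li vec_vs vectorspace.basis_def)
  obtain S where mx: "maximal S (\<lambda>T. T \<subseteq> set (cols M) \<and> V.lin_indpt T)" and finS: "finite S"
    using maximal_exists_superset[of "set (cols M)" "(\<lambda>T. T \<subseteq> set (cols M) \<and> V.lin_indpt T)" "{}"] li0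
    by auto
  have SC: "S \<subseteq> set (cols M)" and liS: "V.lin_indpt S" using mx unfolding maximal_def by auto
  have rk: "mat_rank M = card S" unfolding mat_rank_def using V.rank_card_indpt[OF _ mx] M by simp
  have Scar: "S \<subseteq> carrier_vec n" using SC cs by auto
  have sub: "set (cols M) \<subseteq> V.span S"
  proof
    fix c assume c: "c \<in> set (cols M)"
    show "c \<in> V.span S"
    proof (cases "c \<in> S")
      case True then show ?thesis using V.in_own_span Scar by auto
    next
      case False
      show ?thesis
      proof (rule ccontr)
        assume "c \<notin> V.span S"
        then have "V.lin_indpt (S \<union> {c})"
          using V.lin_dep_iff_in_span[OF Scar liS _ False] c cs by auto
        then have "S \<union> {c} = S" using mx c SC unfolding maximal_def by auto
        with False show False by auto
      qed
    qed
  qed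
  have spaneq: "V.span S = V.span (set (cols M))"
  proof
    show "V.span S \<subseteq> V.span (set (cols M))" using SC V.span_is_monotone by auto
    show "V.span (set (cols M)) \<subseteq> V.span S" using V.span_subsetI[OF Scar sub] .
  qed
  obtain ws where ws: "set ws = S" "distinct ws" using finite_distinct_list[OF finS] by auto
  have A: "mat_of_cols n ws \<in> carrier_mat n (length ws)" by simp
  have "colsp M = V.span (set (cols M))" using V.span_cols_eq_colsp[OF M] by simp
  also have "\<dots> = V.span (set (cols (mat_of_cols n ws)))" using spaneq ws Scar by simp
  also have "\<dots> = colsp (mat_of_cols n ws)" using V.span_cols_eq_colsp[OF A] by simp
  finally have "card (colsp M) = CARD('a) ^ length ws"
    using card_colsp_indpt[of ws] ws Scar liS by simp
  then show ?thesis using rk ws distinct_card by metis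
qed


definition bord :: "'a::field \<Rightarrow> 'a vec \<Rightarrow> 'a vec \<Rightarrow> 'a mat \<Rightarrow> 'a mat" where
  "bord a u v N = mat (Suc (dim_row N)) (Suc (dim_col N))
     (\<lambda>(i,j). if i = 0 then (if j = 0 then a else u $ (j-1)) else (if j = 0 then v $ (i-1) else N $$ (i-1, j-1)))"

definition vtl :: "'a vec \<Rightarrow> 'a vec" where
  "vtl w = vec (dim_vec w - 1) (\<lambda>i. w $ Suc i)"

lemma vec_Suc_split: "z \<in> carrier_vec (Suc k) \<Longrightarrow> z = vCons (z $ 0) (vtl z)"
  by (rule eq_vecI) (auto simp: vtl_def vec_index_vCons)

lemma vtl_vCons[simp]: "vtl (vCons c x) = x"
  by (rule eq_vecI) (auto simp: vtl_def)

lemma vtl_carrier: "z \<in> carrier_vec (Suc k) \<Longrightarrow> vtl z \<in> carrier_vec k"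
  by (auto simp: vtl_def)

lemma smult_vCons: "c \<cdot>\<^sub>v vCons a x = vCons (c * a) (c \<cdot>\<^sub>v x)"
  by (rule eq_vecI) (auto simp: vec_index_vCons)

lemma add_vCons: "dim_vec x = dim_vec y \<Longrightarrow> vCons a x + vCons b y = vCons (a + b) (x + y)"
  by (rule eq_vecI) (auto simp: vec_index_vCons)

lemma minus_vCons: "dim_vec x = dim_vec y \<Longrightarrow> vCons a x - vCons b y = vCons (a - b) (x - y)"
  by (rule eq_vecI) (auto simp: vec_index_vCons)

lemma bord_carrier: "N \<in> carrier_mat n k \<Longrightarrow> bord a u v N \<in> carrier_mat (Suc n) (Suc k)"
  by (auto simp: bord_def)

lemma dim_bord[simp]: "dim_row (bord a u v N) = Suc (dim_row N)" "dim_col (bord a u v N) = Suc (dim_col N)"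
  by (auto simp: bord_def)

lemma row_bord_0: "N \<in> carrier_mat n k \<Longrightarrow> u \<in> carrier_vec k \<Longrightarrow> row (bord a u v N) 0 = vCons a u"
  by (rule eq_vecI) (auto simp: bord_def vec_index_vCons)

lemma row_bord_Suc: "N \<in> carrier_mat n k \<Longrightarrow> v \<in> carrier_vec n \<Longrightarrow> i < n \<Longrightarrow>
   row (bord a u v N) (Suc i) = vCons (v $ i) (row N i)"
  by (rule eq_vecI) (auto simp: bord_def vec_index_vCons)

lemma bord_mult:
  assumes N: "N \<in> carrier_mat n k" and u: "u \<in> carrier_vec k" and v: "v \<in> carrier_vec n"
    and x: "x \<in> carrier_vec k"
  shows "bord a u v N *\<^sub>v vCons c x = vCons (a * c + u \<bullet> x) (c \<cdot>\<^sub>v v + N *\<^sub>v x)"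
proof (rule eq_vecI)
  show "dim_vec (bord a u v N *\<^sub>v vCons c x) = dim_vec (vCons (a * c + u \<bullet> x) (c \<cdot>\<^sub>v v + N *\<^sub>v x))"
    using N v by simp
  fix i assume i: "i < dim_vec (vCons (a * c + u \<bullet> x) (c \<cdot>\<^sub>v v + N *\<^sub>v x))"
  then have i': "i < Suc n" using v N by simp
  show "(bord a u v N *\<^sub>v vCons c x) $ i = vCons (a * c + u \<bullet> x) (c \<cdot>\<^sub>v v + N *\<^sub>v x) $ i"
  proof (cases i)
    case 0
    have "(bord a u v N *\<^sub>v vCons c x) $ 0 = row (bord a u v N) 0 \<bullet> vCons c x"
      using N by simp
    also have "\<dots> = a * c + u \<bullet> x" using row_bord_0[OF N u] by simp
    finally show ?thesis using 0 by simp
  next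
    case (Suc j)
    then have j: "j < n" using i' by simp
    have "(bord a u v N *\<^sub>v vCons c x) $ i = row (bord a u v N) (Suc j) \<bullet> vCons c x"
      using Suc i' N by simp
    also have "\<dots> = v $ j * c + row N j \<bullet> x" using row_bord_Suc[OF N v j] by simp
    finally show ?thesis using Suc j N v by simp
  qed
qed

lemma colsp_bord:
  assumes N: "N \<in> carrier_mat n k" and u: "u \<in> carrier_vec k" and v: "v \<in> carrier_vec n"
  shows "colsp (bord a u v N) = {vCons (a * c + u \<bullet> x) (c \<cdot>\<^sub>v v + N *\<^sub>v x) | c x. x \<in> carrier_vec k}"
proof -
  have dc: "dim_col (bord a u v N) = Suc k" using N by simp
  show ?thesis unfolding colsp_def dc
  proof (auto simp del: vCons_carrier_vec)
    fix z :: "'a vec" assume z: "z \<in> carrier_vec (Suc k)"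
    show "\<exists>c x. bord a u v N *\<^sub>v z = vCons (a * c + u \<bullet> x) (c \<cdot>\<^sub>v v + N *\<^sub>v x) \<and> x \<in> carrier_vec k"
    proof (intro exI conjI)
      show "bord a u v N *\<^sub>v z = vCons (a * (z $ 0) + u \<bullet> vtl z) ((z $ 0) \<cdot>\<^sub>v v + N *\<^sub>v vtl z)"
        using bord_mult[OF N u v vtl_carrier[OF z], of a "z $ 0"] vec_Suc_split[OF z] by simp
      show "vtl z \<in> carrier_vec k" using vtl_carrier[OF z] .
    qed
  next
    fix c and x :: "'a vec" assume x: "x \<in> carrier_vec k"
    show "vCons (a * c + u \<bullet> x) (c \<cdot>\<^sub>v v + N *\<^sub>v x) \<in> (\<lambda>z. bord a u v N *\<^sub>v z) ` carrier_vec (Suc k)"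
      by (rule rev_image_eqI[of "vCons c x"]) (use bord_mult[OF N u v x, of a c] x in auto)
  qed
qed

lemma colsp_add: "M \<in> carrier_mat n k \<Longrightarrow> w \<in> colsp M \<Longrightarrow> w' \<in> colsp M \<Longrightarrow> w + w' \<in> colsp M"
proof -
  assume M: "M \<in> carrier_mat n k" and w: "w \<in> colsp M" and w': "w' \<in> colsp M"
  obtain x where x: "x \<in> carrier_vec k" "w = M *\<^sub>v x" using w M unfolding colsp_def by auto
  obtain y where y: "y \<in> carrier_vec k" "w' = M *\<^sub>v y" using w' M unfolding colsp_def by auto
  have "w + w' = M *\<^sub>v (x + y)" using x y M by (simp add: mult_add_distrib_mat_vec)
  then show ?thesis using x y M unfolding colsp_def by auto
qed

lemma colsp_smult: "M \<in> carrier_mat n k \<Longrightarrow> w \<in> colsp M \<Longrightarrow> c \<cdot>\<^sub>v w \<in> colsp M"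
  unfolding colsp_def
  by (auto intro!: image_eqI[where x = "c \<cdot>\<^sub>v _"] simp: mult_mat_vec)

lemma colsp_zero: "M \<in> carrier_mat n k \<Longrightarrow> 0\<^sub>v n \<in> colsp M"
  unfolding colsp_def
  by (auto intro!: image_eqI[where x = "0\<^sub>v k"])

lemma colsp_carrier: "M \<in> carrier_mat n k \<Longrightarrow> colsp M \<subseteq> carrier_vec n"
  unfolding colsp_def by auto

lemma colsp_minus: "M \<in> carrier_mat n k \<Longrightarrow> w \<in> colsp M \<Longrightarrow> w' \<in> colsp M \<Longrightarrow> w - w' \<in> colsp M"
proof -
  assume M: "M \<in> carrier_mat n k" and w: "w \<in> colsp M" and w': "w' \<in> colsp M"
  have "(-1) \<cdot>\<^sub>v w' \<in> colsp M" using colsp_smult[OF M w'] .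
  then have "w + (-1) \<cdot>\<^sub>v w' \<in> colsp M" using colsp_add[OF M w] by blast
  moreover have "w + (-1) \<cdot>\<^sub>v w' = w - w'" using colsp_carrier[OF M] w w'
    by (intro eq_vecI) auto
  ultimately show ?thesis by simp
qed

lemma finite_colsp: "M \<in> carrier_mat n k \<Longrightarrow> finite (colsp (M :: 'a::{finite,field} mat))"
  by (rule finite_subset[OF colsp_carrier finite_carrier_vec])


lemma card_split_head:
  fixes W :: "'a::{finite,field} vec set"
  assumes W: "W \<subseteq> carrier_vec (Suc n)" and fin: "finite W"
    and add: "\<And>w w'. w \<in> W \<Longrightarrow> w' \<in> W \<Longrightarrow> w + w' \<in> W"
    and minus: "\<And>w w'. w \<in> W \<Longrightarrow> w' \<in> W \<Longrightarrow> w - w' \<in> W"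
  shows "card W = card (vtl ` W) * card {c. vCons c (0\<^sub>v n) \<in> W}"
proof -
  define Z where "Z = {c. vCons c (0\<^sub>v n) \<in> W}"
  define \<sigma> where "\<sigma> y = (SOME w. w \<in> W \<and> vtl w = y)" for y
  have \<sigma>: "\<sigma> y \<in> W \<and> vtl (\<sigma> y) = y" if "y \<in> vtl ` W" for y
    unfolding \<sigma>_def by (rule someI_ex) (use that in auto)
  have sp: "w = vCons (w $ 0) (vtl w)" if "w \<in> W" for w
    using vec_Suc_split W that by auto
  have tl: "vtl w \<in> carrier_vec n" if "w \<in> W" for w using vtl_carrier W that by auto
  define f where "f w = (vtl w, w $ 0 - \<sigma> (vtl w) $ 0)" for w
  define g where "g p = \<sigma> (fst p) + vCons (snd p) (0\<^sub>v n)" for p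
  have "bij_betw f W (vtl ` W \<times> Z)"
  proof (rule bij_betw_byWitness[where f' = g])
    show "\<forall>w\<in>W. g (f w) = w"
    proof
      fix w assume w: "w \<in> W"
      have s: "\<sigma> (vtl w) \<in> W" "vtl (\<sigma> (vtl w)) = vtl w" using \<sigma> w by auto
      have "g (f w) = vCons (\<sigma> (vtl w) $ 0) (vtl w) + vCons (w $ 0 - \<sigma> (vtl w) $ 0) (0\<^sub>v n)"
        unfolding g_def f_def using sp[OF s(1)] s(2) by simp
      also have "\<dots> = vCons (w $ 0) (vtl w)" using tl[OF w] by (simp add: add_vCons)
      finally show "g (f w) = w" using sp[OF w] by simp
    qed
    show "\<forall>p\<in>vtl ` W \<times> Z. f (g p) = p"
    proof
      fix p assume p: "p \<in> vtl ` W \<times> Z"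
      obtain y c where pc: "p = (y, c)" by (cases p)
      have y: "y \<in> vtl ` W" using p pc by auto
      have s: "\<sigma> y \<in> W" "vtl (\<sigma> y) = y" using \<sigma>[OF y] by auto
      have yc: "y \<in> carrier_vec n" using y tl by auto
      have "g p = vCons (\<sigma> y $ 0 + c) y" unfolding g_def pc using sp[OF s(1)] s(2) yc
        by (metis add_vCons carrier_vecD fst_conv index_zero_vec(2) right_zero_vec snd_conv)
      then show "f (g p) = p" unfolding f_def pc by simp
    qed
    show "f ` W \<subseteq> vtl ` W \<times> Z"
    proof
      fix p assume "p \<in> f ` W"
      then obtain w where w: "w \<in> W" and p: "p = f w" by auto
      have s: "\<sigma> (vtl w) \<in> W" "vtl (\<sigma> (vtl w)) = vtl w" using \<sigma> w by auto
      have "w - \<sigma> (vtl w) \<in> W" using minus[OF w s(1)] .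
      moreover have "w - \<sigma> (vtl w) = vCons (w $ 0 - \<sigma> (vtl w) $ 0) (0\<^sub>v n)"
      proof -
        have "w - \<sigma> (vtl w) = vCons (w $ 0) (vtl w) - vCons (\<sigma> (vtl w) $ 0) (vtl w)"
          using sp[OF w] sp[OF s(1)] s(2) by metis
        also have "\<dots> = vCons (w $ 0 - \<sigma> (vtl w) $ 0) (vtl w - vtl w)" by (simp add: minus_vCons)
        also have "vtl w - vtl w = 0\<^sub>v n" using tl[OF w] by simp
        finally show ?thesis .
      qed
      ultimately show "p \<in> vtl ` W \<times> Z" using w p unfolding f_def Z_def by auto
    qed
    show "g ` (vtl ` W \<times> Z) \<subseteq> W"
    proof
      fix w assume "w \<in> g ` (vtl ` W \<times> Z)"
      then obtain y c where y: "y \<in> vtl ` W" and c: "c \<in> Z" and w: "w = g (y, c)" by auto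
      show "w \<in> W" using add[of "\<sigma> y" "vCons c (0\<^sub>v n)"] \<sigma>[OF y] c w unfolding g_def Z_def by auto
    qed
  qed
  then have "card W = card (vtl ` W \<times> Z)" by (rule bij_betw_same_card)
  then show ?thesis unfolding Z_def by (simp add: card_cartesian_product)
qed

lemma card_span_insert:
  fixes N :: "'a::{finite,field} mat"
  assumes N: "N \<in> carrier_mat n k" and v: "v \<in> carrier_vec n"
  shows "card {c \<cdot>\<^sub>v v + y | c y. y \<in> colsp N} = card (colsp N) * (if v \<in> colsp N then 1 else CARD('a))"
proof (cases "v \<in> colsp N")
  case True
  have "{c \<cdot>\<^sub>v v + y | c y. y \<in> colsp N} = colsp N"
  proof (intro equalityI subsetI)
    fix w assume "w \<in> {c \<cdot>\<^sub>v v + y | c y. y \<in> colsp N}"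
    then obtain c y where w: "w = c \<cdot>\<^sub>v v + y" and y: "y \<in> colsp N" by auto
    show "w \<in> colsp N" using w colsp_add[OF N colsp_smult[OF N True] y] by simp
  next
    fix w assume w: "w \<in> colsp N"
    have wc: "w \<in> carrier_vec n" using w colsp_carrier[OF N] by auto
    have "w = 0 \<cdot>\<^sub>v v + w" by (rule eq_vecI) (use wc v in auto)
    then show "w \<in> {c \<cdot>\<^sub>v v + y | c y. y \<in> colsp N}" using w by blast
  qed
  then show ?thesis using True by simp
next
  case False
  have eq: "{c \<cdot>\<^sub>v v + y | c y. y \<in> colsp N} = (\<lambda>(c,y). c \<cdot>\<^sub>v v + y) ` ((UNIV :: 'a set) \<times> colsp N)" by auto
  have inj: "inj_on (\<lambda>(c,y). c \<cdot>\<^sub>v v + y) ((UNIV :: 'a set) \<times> colsp N)"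
  proof (rule inj_onI, clarify)
    fix c y c' y' assume y: "y \<in> colsp N" and y': "y' \<in> colsp N" and e: "c \<cdot>\<^sub>v v + y = c' \<cdot>\<^sub>v v + y'"
    have yc: "y \<in> carrier_vec n" "y' \<in> carrier_vec n" using y y' colsp_carrier[OF N] by auto
    have cc: "c = c'"
    proof (rule ccontr)
      assume ne: "c \<noteq> c'"
      have "(c - c') \<cdot>\<^sub>v v = y' - y"
      proof (rule eq_vecI)
        fix i assume i: "i < dim_vec (y' - y)"
        have "(c \<cdot>\<^sub>v v + y) $ i = (c' \<cdot>\<^sub>v v + y') $ i" using e by simp
        then show "((c - c') \<cdot>\<^sub>v v) $ i = (y' - y) $ i" using i yc v by (simp add: algebra_simps)
      qed (use yc v in auto)
      then have "(1 / (c - c')) \<cdot>\<^sub>v ((c - c') \<cdot>\<^sub>v v) \<in> colsp N"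
        using colsp_smult[OF N colsp_minus[OF N y' y]] by simp
      moreover have "(1 / (c - c')) \<cdot>\<^sub>v ((c - c') \<cdot>\<^sub>v v) = v" using ne by (simp add: smult_smult_assoc)
      ultimately show False using False by simp
    qed
    have "y = y'"
    proof (rule eq_vecI)
      fix i assume i: "i < dim_vec y'"
      have "(c \<cdot>\<^sub>v v + y) $ i = (c' \<cdot>\<^sub>v v + y') $ i" using e by simp
      then show "y $ i = y' $ i" using i yc v cc by simp
    qed (use yc in auto)
    then show "c = c' \<and> y = y'" using cc by simp
  qed
  have "card {c \<cdot>\<^sub>v v + y | c y. y \<in> colsp N} = card ((UNIV :: 'a set) \<times> colsp N)"
    unfolding eq using card_image[OF inj] by simp
  also have "\<dots> = CARD('a) * card (colsp N)" by (simp add: card_cartesian_product)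
  finally show ?thesis using False by simp
qed

lemma card_head_set:
  fixes W :: "'a::{finite,field} vec set"
  assumes sm: "\<And>c w. w \<in> W \<Longrightarrow> c \<cdot>\<^sub>v w \<in> W" and z: "vCons 0 (0\<^sub>v n) \<in> W"
  shows "card {c. vCons c (0\<^sub>v n) \<in> W} = (if vCons 1 (0\<^sub>v n) \<in> W then CARD('a) else 1)"
proof (cases "vCons 1 (0\<^sub>v n) \<in> W")
  case True
  have "{c. vCons c (0\<^sub>v n) \<in> W} = UNIV"
  proof -
    have "c \<cdot>\<^sub>v 0\<^sub>v n = (0\<^sub>v n :: 'a vec)" for c by (rule eq_vecI) auto
    then have "vCons c (0\<^sub>v n) \<in> W" for c using sm[OF True, of c] by (simp add: smult_vCons)
    then show ?thesis by auto
  qed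
  then show ?thesis using True by simp
next
  case False
  have "{c. vCons c (0\<^sub>v n) \<in> W} = {0}"
  proof -
    have "c = 0" if "vCons c (0\<^sub>v n) \<in> W" for c
    proof (rule ccontr)
      assume "c \<noteq> 0"
      moreover have "(1/c) \<cdot>\<^sub>v 0\<^sub>v n = (0\<^sub>v n :: 'a vec)" by (rule eq_vecI) auto
      ultimately have "(1/c) \<cdot>\<^sub>v vCons c (0\<^sub>v n) = vCons 1 (0\<^sub>v n)" by (simp add: smult_vCons)
      with sm[OF that, of "1/c"] False show False by simp
    qed
    then show ?thesis using z by auto
  qed
  then show ?thesis using False by simp
qed


lemma smult_zero_vec'[simp]: "(c::'a::field) \<cdot>\<^sub>v 0\<^sub>v n = 0\<^sub>v n"
  by (rule eq_vecI) auto

definition compat :: "'a::field mat \<Rightarrow> 'a vec \<Rightarrow> bool" where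
  "compat N u = (\<forall>x\<in>carrier_vec (dim_col N). N *\<^sub>v x = 0\<^sub>v (dim_row N) \<longrightarrow> u \<bullet> x = 0)"

definition good :: "'a::field \<Rightarrow> 'a vec \<Rightarrow> 'a vec \<Rightarrow> 'a mat \<Rightarrow> bool" where
  "good a u v N = (compat N u \<and> (v \<notin> colsp N \<or> (\<exists>y\<in>carrier_vec (dim_col N). N *\<^sub>v y = v \<and> a = u \<bullet> y)))"

lemma e0_char:
  fixes N :: "'a::field mat"
  assumes N: "N \<in> carrier_mat n k" and u: "u \<in> carrier_vec k" and v: "v \<in> carrier_vec n"
  shows "vCons 1 (0\<^sub>v n) \<in> colsp (bord a u v N) \<longleftrightarrow> \<not> good a u v N"
proof -
  have e: "vCons 1 (0\<^sub>v n) \<in> colsp (bord a u v N) \<longleftrightarrow>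
     (\<exists>c x. x \<in> carrier_vec k \<and> a * c + u \<bullet> x = 1 \<and> c \<cdot>\<^sub>v v + N *\<^sub>v x = 0\<^sub>v n)"
  proof -
    have "vCons 1 (0\<^sub>v n) \<in> colsp (bord a u v N) \<longleftrightarrow>
      (\<exists>c x. vCons 1 (0\<^sub>v n) = vCons (a * c + u \<bullet> x) (c \<cdot>\<^sub>v v + N *\<^sub>v x) \<and> x \<in> carrier_vec k)"
      unfolding colsp_bord[OF N u v] by blast
    also have "\<dots> \<longleftrightarrow> (\<exists>c x. x \<in> carrier_vec k \<and> a * c + u \<bullet> x = 1 \<and> c \<cdot>\<^sub>v v + N *\<^sub>v x = 0\<^sub>v n)"
      unfolding vCons_eq_vCons by (intro iff_exI) auto
    finally show ?thesis .
  qed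
  have dN: "dim_col N = k" "dim_row N = n" using N by auto
  show ?thesis
  proof
    assume "vCons 1 (0\<^sub>v n) \<in> colsp (bord a u v N)"
    then obtain c x where x: "x \<in> carrier_vec k" and h1: "a * c + u \<bullet> x = 1" and h2: "c \<cdot>\<^sub>v v + N *\<^sub>v x = 0\<^sub>v n"
      using e by auto
    show "\<not> good a u v N"
    proof
      assume g: "good a u v N"
      then have cp: "compat N u" unfolding good_def by simp
      show False
      proof (cases "c = 0")
        case True
        have "N *\<^sub>v x = 0\<^sub>v n"
        proof (rule eq_vecI)
          fix i assume i: "i < dim_vec (0\<^sub>v n :: 'a vec)"
          have "(c \<cdot>\<^sub>v v + N *\<^sub>v x) $ i = 0" using h2 i by simp
          then show "(N *\<^sub>v x) $ i = 0\<^sub>v n $ i" using i v N True by simp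
        qed (use N in simp)
        then have "u \<bullet> x = 0" using cp x dN unfolding compat_def by auto
        then show False using h1 True by simp
      next
        case False
        have "v = N *\<^sub>v ((- 1 / c) \<cdot>\<^sub>v x)"
        proof (rule eq_vecI)
          fix i assume i: "i < dim_vec (N *\<^sub>v ((- 1 / c) \<cdot>\<^sub>v x))"
          then have i': "i < n" using N by simp
          have "(c \<cdot>\<^sub>v v + N *\<^sub>v x) $ i = 0" using h2 i' by simp
          then have "c * v $ i + (N *\<^sub>v x) $ i = 0" using i' v N by simp
          moreover have "(N *\<^sub>v ((- 1 / c) \<cdot>\<^sub>v x)) $ i = (- 1 / c) * (N *\<^sub>v x) $ i"
            using mult_mat_vec[OF N x] i' N by simp
          ultimately have "c * v $ i = - (N *\<^sub>v x) $ i" "(N *\<^sub>v ((- 1 / c) \<cdot>\<^sub>v x)) $ i = - (N *\<^sub>v x) $ i / c"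
            by (simp_all add: eq_neg_iff_add_eq_0)
          then have "v $ i = - (N *\<^sub>v x) $ i / c" using False by (simp add: field_simps)
          then show "v $ i = (N *\<^sub>v ((- 1 / c) \<cdot>\<^sub>v x)) $ i" using \<open>(N *\<^sub>v ((- 1 / c) \<cdot>\<^sub>v x)) $ i = - (N *\<^sub>v x) $ i / c\<close>
            by simp
        qed (use v N in auto)
        then have "v \<in> colsp N" unfolding colsp_def using x dN by auto
        then obtain y where y: "y \<in> carrier_vec k" "N *\<^sub>v y = v" "a = u \<bullet> y"
          using g dN unfolding good_def by auto
        have "N *\<^sub>v (x + c \<cdot>\<^sub>v y) = 0\<^sub>v n"
        proof -
          have "N *\<^sub>v (x + c \<cdot>\<^sub>v y) = N *\<^sub>v x + c \<cdot>\<^sub>v (N *\<^sub>v y)"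
            using N x y by (simp add: mult_add_distrib_mat_vec mult_mat_vec)
          also have "\<dots> = c \<cdot>\<^sub>v v + N *\<^sub>v x" using y N v x
            by (intro eq_vecI) auto
          finally show ?thesis using h2 by simp
        qed
        then have "u \<bullet> (x + c \<cdot>\<^sub>v y) = 0" using cp x y dN unfolding compat_def by auto
        then have "u \<bullet> x + c * (u \<bullet> y) = 0" using u x y by (simp add: scalar_prod_add_distrib[of u k])
        then show False using h1 y(3) by (simp add: algebra_simps)
      qed
    qed
  next
    assume ng: "\<not> good a u v N"
    show "vCons 1 (0\<^sub>v n) \<in> colsp (bord a u v N)"
    proof (cases "compat N u")
      case False
      then obtain x where x: "x \<in> carrier_vec k" "N *\<^sub>v x = 0\<^sub>v n" "u \<bullet> x \<noteq> 0"
        unfolding compat_def using dN by auto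
      let ?x = "(1 / (u \<bullet> x)) \<cdot>\<^sub>v x"
      have "a * 0 + u \<bullet> ?x = 1" using x u by simp
      moreover have "0 \<cdot>\<^sub>v v + N *\<^sub>v ?x = 0\<^sub>v n"
      proof -
        have "N *\<^sub>v ?x = (1 / (u \<bullet> x)) \<cdot>\<^sub>v (N *\<^sub>v x)" using mult_mat_vec[OF N x(1)] .
        then have "N *\<^sub>v ?x = 0\<^sub>v n" using x(2) by simp
        then show ?thesis using v by (intro eq_vecI) auto
      qed
      moreover have "?x \<in> carrier_vec k" using x by simp
      ultimately show ?thesis using e by blast
    next
      case True
      then have vC: "v \<in> colsp N" and ny: "\<And>y. y \<in> carrier_vec k \<Longrightarrow> N *\<^sub>v y = v \<Longrightarrow> a \<noteq> u \<bullet> y"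
        using ng dN unfolding good_def by auto
      obtain y0 where y0: "y0 \<in> carrier_vec k" "N *\<^sub>v y0 = v" using vC dN unfolding colsp_def by auto
      have ne: "a - u \<bullet> y0 \<noteq> 0" using ny[OF y0] by simp
      define c where "c = 1 / (a - u \<bullet> y0)"
      let ?x = "(- c) \<cdot>\<^sub>v y0"
      have ux: "u \<bullet> ?x = - c * (u \<bullet> y0)" using u y0 by simp
      have "a * c + u \<bullet> ?x = c * (a - u \<bullet> y0)" unfolding ux by (simp add: algebra_simps)
      also have "\<dots> = 1" using ne unfolding c_def by simp
      finally have "a * c + u \<bullet> ?x = 1" .
      moreover have "c \<cdot>\<^sub>v v + N *\<^sub>v ?x = 0\<^sub>v n"
      proof -
        have "N *\<^sub>v ?x = (- c) \<cdot>\<^sub>v v" using mult_mat_vec[OF N y0(1)] y0 by simp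
        then show ?thesis using v by (intro eq_vecI) auto
      qed
      moreover have "?x \<in> carrier_vec k" using y0 by simp
      ultimately show ?thesis using e by blast
    qed
  qed
qed

lemma card_ge2: "CARD('a::{finite,field}) \<ge> 2"
proof -
  have "card {0, 1::'a} \<le> CARD('a)" by (rule card_mono) auto
  then show ?thesis by simp
qed

lemma rank_bord:
  fixes N :: "'a::{finite,field} mat"
  assumes N: "N \<in> carrier_mat n k" and u: "u \<in> carrier_vec k" and v: "v \<in> carrier_vec n"
  shows "mat_rank (bord a u v N) = mat_rank N + (if v \<in> colsp N then 0 else 1) + (if good a u v N then 0 else 1)"
proof -
  let ?B = "bord a u v N" let ?W = "colsp ?B" let ?q = "CARD('a)"
  have B: "?B \<in> carrier_mat (Suc n) (Suc k)" using bord_carrier[OF N] .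
  have c1: "card ?W = card (vtl ` ?W) * card {c. vCons c (0\<^sub>v n) \<in> ?W}"
    by (rule card_split_head[OF colsp_carrier[OF B] finite_colsp[OF B] colsp_add[OF B] colsp_minus[OF B]])
  have "vtl ` ?W = {c \<cdot>\<^sub>v v + N *\<^sub>v x | c x. x \<in> carrier_vec k}"
  proof (intro equalityI subsetI)
    fix y assume "y \<in> vtl ` ?W"
    then obtain c x where "x \<in> carrier_vec k" "y = vtl (vCons (a * c + u \<bullet> x) (c \<cdot>\<^sub>v v + N *\<^sub>v x))"
      unfolding colsp_bord[OF N u v] by blast
    then show "y \<in> {c \<cdot>\<^sub>v v + N *\<^sub>v x | c x. x \<in> carrier_vec k}" by auto
  next
    fix y assume "y \<in> {c \<cdot>\<^sub>v v + N *\<^sub>v x | c x. x \<in> carrier_vec k}"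
    then obtain c x where cx: "x \<in> carrier_vec k" "y = c \<cdot>\<^sub>v v + N *\<^sub>v x" by blast
    have "vCons (a * c + u \<bullet> x) (c \<cdot>\<^sub>v v + N *\<^sub>v x) \<in> ?W"
      unfolding colsp_bord[OF N u v] using cx by blast
    then show "y \<in> vtl ` ?W" using cx by (metis vtl_vCons image_eqI)
  qed
  also have "\<dots> = {c \<cdot>\<^sub>v v + y | c y. y \<in> colsp N}"
    unfolding colsp_def using N by auto
  finally have "vtl ` ?W = {c \<cdot>\<^sub>v v + y | c y. y \<in> colsp N}" .
  then have c2: "card (vtl ` ?W) = ?q ^ mat_rank N * (if v \<in> colsp N then 1 else ?q)"
    using card_span_insert[OF N v] card_colsp_rank[OF N] by simp
  have z: "vCons 0 (0\<^sub>v n) \<in> ?W" using colsp_zero[OF B] by (simp add: zero_vec_Suc)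
  have c3: "card {c. vCons c (0\<^sub>v n) \<in> ?W} = (if good a u v N then 1 else ?q)"
    using card_head_set[of ?W, OF colsp_smult[OF B] z] e0_char[OF N u v] by simp
  have "?q ^ mat_rank ?B = ?q ^ (mat_rank N + (if v \<in> colsp N then 0 else 1) + (if good a u v N then 0 else 1))"
    using c1 c2 c3 card_colsp_rank[OF B] by (simp add: power_add)
  then show ?thesis using card_ge2[where 'a='a] by (simp add: power_inject_exp)
qed


definition Kset :: "'a::field mat \<Rightarrow> 'a vec set" where
  "Kset N = {x \<in> carrier_vec (dim_col N). N *\<^sub>v x = 0\<^sub>v (dim_row N)}"

definition pre :: "'a::field mat \<Rightarrow> 'a vec \<Rightarrow> 'a vec" where
  "pre N w = (SOME y. y \<in> carrier_vec (dim_col N) \<and> N *\<^sub>v y = w)"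

lemma pre:
  assumes N: "N \<in> carrier_mat n k" and w: "w \<in> colsp N"
  shows "pre N w \<in> carrier_vec k \<and> N *\<^sub>v pre N w = w"
proof -
  have "\<exists>y. y \<in> carrier_vec (dim_col N) \<and> N *\<^sub>v y = w" using w unfolding colsp_def by auto
  then have "pre N w \<in> carrier_vec (dim_col N) \<and> N *\<^sub>v pre N w = w" unfolding pre_def by (rule someI_ex)
  then show ?thesis using N by simp
qed

lemma mult_minus_vec:
  fixes N :: "'a::field mat"
  assumes N: "N \<in> carrier_mat n k" and x: "x \<in> carrier_vec k" and y: "y \<in> carrier_vec k"
  shows "N *\<^sub>v (x - y) = N *\<^sub>v x - N *\<^sub>v y"
  using mult_minus_distrib_mat_vec[OF N x y] .

lemma compat_eq:
  assumes N: "N \<in> carrier_mat n k" and c: "compat N u" and u: "u \<in> carrier_vec k"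
    and y: "y \<in> carrier_vec k" and y': "y' \<in> carrier_vec k" and e: "N *\<^sub>v y = N *\<^sub>v y'"
  shows "u \<bullet> y = u \<bullet> y'"
proof -
  have "N *\<^sub>v (y - y') = 0\<^sub>v n" using mult_minus_vec[OF N y y'] e N y' by simp
  then have "u \<bullet> (y - y') = 0" using c N y y' unfolding compat_def by auto
  then show ?thesis using u y y' by (simp add: scalar_prod_minus_distrib)
qed

lemma card_C_K:
  fixes N :: "'a::{finite,field} mat"
  assumes N: "N \<in> carrier_mat n k"
  shows "card (colsp N) * card (Kset N) = CARD('a) ^ k"
proof -
  define f where "f x = (N *\<^sub>v x, x - pre N (N *\<^sub>v x))" for x
  define g where "g p = pre N (fst p) + snd p" for p
  have inC: "N *\<^sub>v x \<in> colsp N" if "x \<in> carrier_vec k" for x using that N unfolding colsp_def by auto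
  have "bij_betw f (carrier_vec k) (colsp N \<times> Kset N)"
  proof (rule bij_betw_byWitness[where f' = g])
    show "\<forall>x\<in>carrier_vec k. g (f x) = x"
    proof
      fix x :: "'a vec" assume x: "x \<in> carrier_vec k"
      have p: "pre N (N *\<^sub>v x) \<in> carrier_vec k" using pre[OF N inC[OF x]] by simp
      show "g (f x) = x" unfolding g_def f_def using p x by (intro eq_vecI) auto
    qed
    show "\<forall>p\<in>colsp N \<times> Kset N. f (g p) = p"
    proof
      fix p assume p: "p \<in> colsp N \<times> Kset N"
      obtain w z where wz: "p = (w, z)" by (cases p)
      have w: "w \<in> colsp N" and z: "z \<in> carrier_vec k" "N *\<^sub>v z = 0\<^sub>v n"
        using p wz N unfolding Kset_def by auto
      have pw: "pre N w \<in> carrier_vec k" "N *\<^sub>v pre N w = w" using pre[OF N w] by auto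
      have wc: "w \<in> carrier_vec n" using w colsp_carrier[OF N] by auto
      have Ng: "N *\<^sub>v g p = w" unfolding g_def wz using pw z N wc
        by (simp add: mult_add_distrib_mat_vec)
      show "f (g p) = p" unfolding f_def Ng unfolding g_def wz using pw z by (auto intro!: eq_vecI)
    qed
    show "f ` carrier_vec k \<subseteq> colsp N \<times> Kset N"
    proof
      fix p assume "p \<in> f ` carrier_vec k"
      then obtain x where x: "x \<in> carrier_vec k" and p: "p = f x" by auto
      have pr: "pre N (N *\<^sub>v x) \<in> carrier_vec k" "N *\<^sub>v pre N (N *\<^sub>v x) = N *\<^sub>v x"
        using pre[OF N inC[OF x]] by auto
      have "N *\<^sub>v (x - pre N (N *\<^sub>v x)) = 0\<^sub>v n" using mult_minus_vec[OF N x pr(1)] pr(2) N x by simp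
      then show "p \<in> colsp N \<times> Kset N" using p x pr N inC[OF x] unfolding f_def Kset_def by auto
    qed
    show "g ` (colsp N \<times> Kset N) \<subseteq> carrier_vec k"
    proof
      fix y assume "y \<in> g ` (colsp N \<times> Kset N)"
      then obtain w z where w: "w \<in> colsp N" and z: "z \<in> Kset N" and y: "y = g (w, z)" by auto
      show "y \<in> carrier_vec k" using y pre[OF N w] z N unfolding g_def Kset_def by auto
    qed
  qed
  then have "card (carrier_vec k :: 'a vec set) = card (colsp N \<times> Kset N)" by (rule bij_betw_same_card)
  then show ?thesis by (simp add: card_cartesian_product card_carrier_vec)
qed

definition Sset :: "'a::field mat \<Rightarrow> 'a \<Rightarrow> ('a vec \<times> 'a vec) set" where
  "Sset N b = {(u,v). u \<in> carrier_vec (dim_col N) \<and> v \<in> carrier_vec (dim_row N) \<and> compat N u \<and>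
      (\<exists>y\<in>carrier_vec (dim_col N). N *\<^sub>v y = v \<and> b = u \<bullet> y)}"

definition Tset :: "'a::field mat \<Rightarrow> 'a \<Rightarrow> ('a vec \<times> 'a vec) set" where
  "Tset N b = {(u,y). u \<in> carrier_vec (dim_col N) \<and> y \<in> carrier_vec (dim_col N) \<and> compat N u \<and> u \<bullet> y = b}"

lemma card_T_S:
  fixes N :: "'a::{finite,field} mat"
  assumes N: "N \<in> carrier_mat n k"
  shows "card (Tset N b) = card (Sset N b) * card (Kset N)"
proof -
  have dN: "dim_col N = k" "dim_row N = n" using N by auto
  define f where "f (p :: 'a vec \<times> 'a vec) = ((fst p, N *\<^sub>v snd p), snd p - pre N (N *\<^sub>v snd p))" for p
  define g where "g (q :: ('a vec \<times> 'a vec) \<times> 'a vec) = (fst (fst q), pre N (snd (fst q)) + snd q)" for q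
  have inC: "N *\<^sub>v x \<in> colsp N" if "x \<in> carrier_vec k" for x using that N unfolding colsp_def by auto
  have "bij_betw f (Tset N b) (Sset N b \<times> Kset N)"
  proof (rule bij_betw_byWitness[where f' = g])
    show "\<forall>p\<in>Tset N b. g (f p) = p"
    proof
      fix p assume p: "p \<in> Tset N b"
      obtain u y where uy: "p = (u, y)" by (cases p)
      have y: "y \<in> carrier_vec k" using p uy dN unfolding Tset_def by auto
      have pr: "pre N (N *\<^sub>v y) \<in> carrier_vec k" using pre[OF N inC[OF y]] by simp
      show "g (f p) = p" unfolding g_def f_def uy using pr y by (auto intro!: eq_vecI)
    qed
    show "\<forall>q\<in>Sset N b \<times> Kset N. f (g q) = q"
    proof
      fix q assume q: "q \<in> Sset N b \<times> Kset N"
      obtain u v z where uvz: "q = ((u, v), z)" by (metis prod.collapse)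
      have v: "v \<in> colsp N" and z: "z \<in> carrier_vec k" "N *\<^sub>v z = 0\<^sub>v n"
        using q uvz dN unfolding Sset_def Kset_def colsp_def by auto
      have pw: "pre N v \<in> carrier_vec k" "N *\<^sub>v pre N v = v" using pre[OF N v] by auto
      have vc: "v \<in> carrier_vec n" using v colsp_carrier[OF N] by auto
      have Ng: "N *\<^sub>v (pre N v + z) = v" using pw z N vc by (simp add: mult_add_distrib_mat_vec)
      show "f (g q) = q" unfolding f_def g_def uvz using Ng pw z by (auto intro!: eq_vecI)
    qed
    show "f ` Tset N b \<subseteq> Sset N b \<times> Kset N"
    proof
      fix q assume "q \<in> f ` Tset N b"
      then obtain u y where p: "(u, y) \<in> Tset N b" and q: "q = f (u, y)" by auto
      have u: "u \<in> carrier_vec k" and y: "y \<in> carrier_vec k" and c: "compat N u" and b: "u \<bullet> y = b"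
        using p dN unfolding Tset_def by auto
      have pr: "pre N (N *\<^sub>v y) \<in> carrier_vec k" "N *\<^sub>v pre N (N *\<^sub>v y) = N *\<^sub>v y"
        using pre[OF N inC[OF y]] by auto
      have "N *\<^sub>v (y - pre N (N *\<^sub>v y)) = 0\<^sub>v n" using mult_minus_vec[OF N y pr(1)] pr(2) N y by simp
      then show "q \<in> Sset N b \<times> Kset N" using q u y c b pr N
        unfolding f_def Kset_def Sset_def by auto
    qed
    show "g ` (Sset N b \<times> Kset N) \<subseteq> Tset N b"
    proof
      fix p assume "p \<in> g ` (Sset N b \<times> Kset N)"
      then obtain u v z where s: "(u, v) \<in> Sset N b" and z: "z \<in> Kset N" and p: "p = g ((u, v), z)" by auto
      have u: "u \<in> carrier_vec k" and c: "compat N u" and v: "v \<in> carrier_vec n"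
        using s dN unfolding Sset_def by auto
      obtain y where y: "y \<in> carrier_vec k" "N *\<^sub>v y = v" "b = u \<bullet> y" using s dN unfolding Sset_def by auto
      have vC: "v \<in> colsp N" using y N unfolding colsp_def by auto
      have pw: "pre N v \<in> carrier_vec k" "N *\<^sub>v pre N v = v" using pre[OF N vC] by auto
      have zc: "z \<in> carrier_vec k" "N *\<^sub>v z = 0\<^sub>v n" using z dN unfolding Kset_def by auto
      have uz: "u \<bullet> z = 0" using c zc dN unfolding compat_def by auto
      have "u \<bullet> pre N v = u \<bullet> y" using compat_eq[OF N c u pw(1) y(1)] pw y by simp
      then have "u \<bullet> (pre N v + z) = b" using uz y pw zc u by (simp add: scalar_prod_add_distrib[of u k])
      then show "p \<in> Tset N b" using p u pw zc c dN unfolding g_def Tset_def by auto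
    qed
  qed
  then have "card (Tset N b) = card (Sset N b \<times> Kset N)" by (rule bij_betw_same_card)
  then show ?thesis by (simp add: card_cartesian_product)
qed

lemma card_dot_shift:
  fixes u :: "'a::{finite,field} vec"
  assumes u: "u \<in> carrier_vec k" and nz: "u \<noteq> 0\<^sub>v k"
  shows "card {y \<in> carrier_vec k. u \<bullet> y = b} = card {y \<in> carrier_vec k. u \<bullet> y = b'}"
proof -
  obtain i where i: "i < k" "u $ i \<noteq> 0"
    using nz u by (metis carrier_vecD eq_vecI index_zero_vec(1) index_zero_vec(2))
  define e where "e = ((b' - b) / u $ i) \<cdot>\<^sub>v unit_vec k i"
  have ec: "e \<in> carrier_vec k" unfolding e_def by simp
  have ue: "u \<bullet> e = b' - b" unfolding e_def using i u by simp
  have "bij_betw (\<lambda>y. y + e) {y \<in> carrier_vec k. u \<bullet> y = b} {y \<in> carrier_vec k. u \<bullet> y = b'}"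
  proof (rule bij_betw_byWitness[where f' = "\<lambda>y. y - e"])
    show "\<forall>y\<in>{y \<in> carrier_vec k. u \<bullet> y = b}. y + e - e = y" using ec by (auto intro!: eq_vecI)
    show "\<forall>y\<in>{y \<in> carrier_vec k. u \<bullet> y = b'}. y - e + e = y" using ec by (auto intro!: eq_vecI)
    show "(\<lambda>y. y + e) ` {y \<in> carrier_vec k. u \<bullet> y = b} \<subseteq> {y \<in> carrier_vec k. u \<bullet> y = b'}"
      using ec ue u by (auto simp: scalar_prod_add_distrib[of u k])
    show "(\<lambda>y. y - e) ` {y \<in> carrier_vec k. u \<bullet> y = b'} \<subseteq> {y \<in> carrier_vec k. u \<bullet> y = b}"
      using ec ue u by (auto simp: scalar_prod_minus_distrib[of u k])
  qed
  then show ?thesis by (rule bij_betw_same_card)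
qed

lemma card_T_shift:
  fixes N :: "'a::{finite,field} mat"
  assumes N: "N \<in> carrier_mat n k" and a: "a \<noteq> 0"
  shows "card (Tset N 0) = card (Tset N a) + CARD('a) ^ k"
proof -
  define Cp where "Cp = {u \<in> carrier_vec k. compat N u}"
  define Y where "Y u b = {y \<in> carrier_vec k. u \<bullet> y = b}" for u :: "'a vec" and b :: 'a
  have dN: "dim_col N = k" "dim_row N = n" using N by auto
  have T: "Tset N b = Sigma Cp (\<lambda>u. Y u b)" for b unfolding Tset_def Cp_def Y_def dN by auto
  have finCp: "finite Cp" unfolding Cp_def by simp
  have finY: "finite (Y u b)" for u b unfolding Y_def by simp
  have cT: "card (Tset N b) = (\<Sum>u\<in>Cp. card (Y u b))" for b unfolding T using finCp finY by (simp add: card_SigmaI)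
  have z: "0\<^sub>v k \<in> Cp" unfolding Cp_def compat_def using dN by simp
  have s: "(\<Sum>u\<in>Cp. card (Y u b)) = card (Y (0\<^sub>v k) b) + (\<Sum>u\<in>Cp - {0\<^sub>v k}. card (Y u b))" for b
    using sum.remove[OF finCp z] .
  have eqr: "(\<Sum>u\<in>Cp - {0\<^sub>v k}. card (Y u 0)) = (\<Sum>u\<in>Cp - {0\<^sub>v k}. card (Y u a))"
    by (rule sum.cong) (auto simp: Y_def Cp_def intro: card_dot_shift)
  have Y00: "Y (0\<^sub>v k) 0 = carrier_vec k" unfolding Y_def by auto
  have Y0a: "Y (0\<^sub>v k) a = {}" unfolding Y_def using a by auto
  show ?thesis unfolding cT s eqr Y00 Y0a by (simp add: card_carrier_vec)
qed


definition fcnt :: "'a::field mat \<Rightarrow> nat \<Rightarrow> 'a \<Rightarrow> nat" where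
  "fcnt N t b = card {(u,v). u \<in> carrier_vec (dim_col N) \<and> v \<in> carrier_vec (dim_row N) \<and> mat_rank (bord b u v N) \<le> t}"

lemma fcnt_shift:
  fixes N :: "'a::{finite,field} mat"
  assumes N: "N \<in> carrier_mat n k" and a: "a \<noteq> 0"
  shows "fcnt N t 0 = fcnt N t a + (if mat_rank N = t then CARD('a) ^ t else 0)"
proof -
  have dN: "dim_col N = k" "dim_row N = n" using N by auto
  let ?P = "\<lambda>b. {(u,v). u \<in> carrier_vec k \<and> v \<in> carrier_vec n \<and> mat_rank (bord b u v N) \<le> t}"
  have fc: "fcnt N t b = card (?P b)" for b unfolding fcnt_def dN by simp
  have rk: "mat_rank (bord b u v N) = mat_rank N + (if v \<in> colsp N then 0 else 1) + (if good b u v N then 0 else 1)"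
    if "u \<in> carrier_vec k" "v \<in> carrier_vec n" for b u v using rank_bord[OF N that] .
  show ?thesis
  proof (cases "mat_rank N = t")
    case False
    have "?P 0 = ?P a"
    proof -
      have "mat_rank (bord 0 u v N) \<le> t \<longleftrightarrow> mat_rank (bord a u v N) \<le> t"
        if u: "u \<in> carrier_vec k" and v: "v \<in> carrier_vec n" for u v
      proof (cases "v \<in> colsp N")
        case True
        then show ?thesis unfolding rk[OF u v] using False by auto
      next
        case nv: False
        then have "good 0 u v N = good a u v N" unfolding good_def by simp
        then show ?thesis unfolding rk[OF u v] by simp
      qed
      then show ?thesis by auto
    qed
    then show ?thesis unfolding fc using False by simp
  next
    case True
    have PS: "?P b = Sset N b" for b
    proof -
      have "mat_rank (bord b u v N) \<le> t \<longleftrightarrow> (compat N u \<and> (\<exists>y\<in>carrier_vec k. N *\<^sub>v y = v \<and> b = u \<bullet> y))"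
        if u: "u \<in> carrier_vec k" and v: "v \<in> carrier_vec n" for u v
      proof -
        have "mat_rank (bord b u v N) \<le> t \<longleftrightarrow> v \<in> colsp N \<and> good b u v N"
          unfolding rk[OF u v] using True by auto
        also have "\<dots> \<longleftrightarrow> (compat N u \<and> (\<exists>y\<in>carrier_vec k. N *\<^sub>v y = v \<and> b = u \<bullet> y))"
          unfolding good_def colsp_def dN by auto
        finally show ?thesis .
      qed
      then show ?thesis unfolding Sset_def dN by auto
    qed
    have CK: "card (colsp N) * card (Kset N) = CARD('a) ^ k" by (rule card_C_K[OF N])
    have C: "card (colsp N) = CARD('a) ^ t" using card_colsp_rank[OF N] True by simp
    have Kpos: "card (Kset N) > 0"
    proof -
      have "0\<^sub>v k \<in> Kset N" unfolding Kset_def using N by (auto intro!: eq_vecI)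
      moreover have "finite (Kset N)" unfolding Kset_def by simp
      ultimately show ?thesis by (auto simp: card_gt_0_iff)
    qed
    have "card (Sset N 0) * card (Kset N) = card (Sset N a) * card (Kset N) + card (colsp N) * card (Kset N)"
      using card_T_S[OF N, of 0] card_T_S[OF N, of a] card_T_shift[OF N a] CK by simp
    then have "card (Sset N 0) * card (Kset N) = (card (Sset N a) + card (colsp N)) * card (Kset N)"
      by (simp add: algebra_simps)
    then have "card (Sset N 0) = card (Sset N a) + card (colsp N)" using Kpos by simp
    then show ?thesis unfolding fc PS using True C by simp
  qed
qed

lemma fcnt_formula:
  fixes N :: "'a::{finite,field} mat"
  assumes N: "N \<in> carrier_mat n k"
  shows "fcnt N t b = fcnt N t 1 + (if b = 0 \<and> mat_rank N = t then CARD('a) ^ t else 0)"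
  using fcnt_shift[OF N, of 1 t] fcnt_shift[OF N, of b t] by (cases "b = 0") auto


lemma finite_carrier_mat: "finite (carrier_mat n k :: 'a::finite mat set)"
proof -
  have "carrier_mat n k \<subseteq> (\<lambda>f. mat n k f) ` ({0..<n} \<times> {0..<k} \<rightarrow>\<^sub>E (UNIV :: 'a set))"
  proof
    fix M :: "'a mat" assume M: "M \<in> carrier_mat n k"
    let ?f = "restrict (\<lambda>p. M $$ p) ({0..<n} \<times> {0..<k})"
    have "M = mat n k ?f" using M by (auto intro!: eq_matI)
    then show "M \<in> (\<lambda>f. mat n k f) ` ({0..<n} \<times> {0..<k} \<rightarrow>\<^sub>E UNIV)" by auto
  qed
  moreover have "finite ({0..<n} \<times> {0..<k} \<rightarrow>\<^sub>E (UNIV :: 'a set))" by (intro finite_PiE) auto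
  ultimately show ?thesis using finite_subset by blast
qed

definition exN :: "'a mat \<Rightarrow> 'a mat" where "exN M = mat (dim_row M - 1) (dim_col M - 1) (\<lambda>(i,j). M $$ (Suc i, Suc j))"
definition exu :: "'a mat \<Rightarrow> 'a vec" where "exu M = vec (dim_col M - 1) (\<lambda>j. M $$ (0, Suc j))"
definition exv :: "'a mat \<Rightarrow> 'a vec" where "exv M = vec (dim_row M - 1) (\<lambda>i. M $$ (Suc i, 0))"

lemma ex_bord:
  assumes N: "N \<in> carrier_mat n k" and u: "u \<in> carrier_vec k" and v: "v \<in> carrier_vec n"
  shows "exN (bord b u v N) = N" "exu (bord b u v N) = u" "exv (bord b u v N) = v" "bord b u v N $$ (0,0) = b"
  using N u v by (auto simp: exN_def exu_def exv_def bord_def intro!: eq_matI eq_vecI)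

lemma bord_ex:
  assumes M: "M \<in> carrier_mat (Suc n) (Suc k)"
  shows "bord (M $$ (0,0)) (exu M) (exv M) (exN M) = M"
  using M by (auto simp: exN_def exu_def exv_def bord_def intro!: eq_matI split: nat.splits)

lemma ex_carrier:
  assumes M: "M \<in> carrier_mat (Suc n) (Suc k)"
  shows "exN M \<in> carrier_mat n k" "exu M \<in> carrier_vec k" "exv M \<in> carrier_vec n"
  using M by (auto simp: exN_def exu_def exv_def)

lemma tau_bord:
  assumes N: "N \<in> carrier_mat n k" and r: "1 \<le> r" "r - 1 \<le> n" "r - 1 \<le> k"
  shows "tau r (bord b u v N) = b + tau (r - 1) N"
proof -
  obtain r' where r': "r = Suc r'" using r by (cases r) auto
  have "tau r (bord b u v N) = (\<Sum>i<Suc r'. bord b u v N $$ (i, i))" unfolding tau_def r' ..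
  also have "\<dots> = bord b u v N $$ (0, 0) + (\<Sum>i<r'. bord b u v N $$ (Suc i, Suc i))"
    by (simp only: sum.lessThan_Suc_shift)
  also have "(\<Sum>i<r'. bord b u v N $$ (Suc i, Suc i)) = (\<Sum>i<r'. N $$ (i, i))"
    by (rule sum.cong) (use N r r' in \<open>auto simp: bord_def\<close>)
  finally show ?thesis using N unfolding tau_def r' by (simp add: bord_def)
qed

lemma inner_sum:
  fixes N :: "'a::{finite,field} mat"
  assumes N: "N \<in> carrier_mat n k"
  shows "(\<Sum>b\<in>{b. b + c \<noteq> 0}. fcnt N t b) =
     (CARD('a) - 1) * fcnt N t 1 + (if c \<noteq> 0 \<and> mat_rank N = t then CARD('a) ^ t else 0)"
proof -
  have B: "{b::'a. b + c \<noteq> 0} = UNIV - {- c}" by (auto simp: add_eq_0_iff)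
  have cB: "card {b::'a. b + c \<noteq> 0} = CARD('a) - 1" unfolding B by (simp add: card_Diff_subset)
  have key: "fcnt N t b = fcnt N t 1 + (if b = 0 then (if mat_rank N = t then CARD('a) ^ t else 0) else 0)" for b
    using fcnt_formula[OF N, of t b] by (cases "b = 0") simp_all
  have "(\<Sum>b\<in>{b. b + c \<noteq> 0}. fcnt N t b) =
      (\<Sum>b\<in>{b. b + c \<noteq> 0}. fcnt N t 1 + (if b = 0 then (if mat_rank N = t then CARD('a) ^ t else 0) else 0))"
    by (rule sum.cong[OF refl], rule key)
  also have "\<dots> = card {b::'a. b + c \<noteq> 0} * fcnt N t 1 + (if (0::'a) \<in> {b. b + c \<noteq> 0} then (if mat_rank N = t then CARD('a) ^ t else 0) else 0)"
    by (simp add: sum.distrib sum.delta)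
  finally show ?thesis using cB by simp
qed

lemma A_formula:
  fixes ty :: "'a::{finite,field} itself"
  assumes r: "1 \<le> r" "r \<le> Suc n" and nk: "n \<le> k"
  shows "card {M :: 'a mat. M \<in> carrier_mat (Suc n) (Suc k) \<and> mat_rank M \<le> t \<and> tau r M \<noteq> 0}
     = (\<Sum>N \<in> (carrier_mat n k :: 'a mat set). (CARD('a) - 1) * fcnt N t 1) + CARD('a) ^ t * frak_w ty (r - 1) t n k"
proof -
  define Bs where "Bs N = {b::'a. b + tau (r - 1) N \<noteq> 0}" for N :: "'a mat"
  define Ps where "Ps N b = {(u,v). u \<in> carrier_vec k \<and> v \<in> carrier_vec n \<and> mat_rank (bord b u v N) \<le> t}"
    for N :: "'a mat" and b :: 'a
  define D where "D = Sigma (carrier_mat n k) (\<lambda>N. Sigma (Bs N) (\<lambda>b. Ps N b))"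
  define T where "T = {M :: 'a mat. M \<in> carrier_mat (Suc n) (Suc k) \<and> mat_rank M \<le> t \<and> tau r M \<noteq> 0}"
  have r1: "r - 1 \<le> n" "r - 1 \<le> k" using r nk by auto
  have fP: "fcnt N t b = card (Ps N b)" if "N \<in> carrier_mat n k" for N b
    using that unfolding fcnt_def Ps_def by auto
  have finP: "finite (Ps N b)" for N b
    by (rule finite_subset[of _ "carrier_vec k \<times> carrier_vec n"]) (auto simp: Ps_def)
  have cD: "card D = (\<Sum>N\<in>carrier_mat n k. \<Sum>b\<in>Bs N. card (Ps N b))"
  proof -
    have "card D = (\<Sum>N\<in>carrier_mat n k. card (Sigma (Bs N) (Ps N)))"
      unfolding D_def by (rule card_SigmaI) (use finite_carrier_mat finP in \<open>auto intro: finite_SigmaI\<close>)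
    also have "\<dots> = (\<Sum>N\<in>carrier_mat n k. \<Sum>b\<in>Bs N. card (Ps N b))"
      by (rule sum.cong[OF refl], rule card_SigmaI) (auto simp: finP)
    finally show ?thesis .
  qed
  define h where "h (p :: 'a mat \<times> 'a \<times> 'a vec \<times> 'a vec) = bord (fst (snd p)) (fst (snd (snd p))) (snd (snd (snd p))) (fst p)" for p
  define h' where "h' M = (exN M, (M $$ (0,0), (exu M, exv M)))" for M :: "'a mat"
  have "bij_betw h D T"
  proof (rule bij_betw_byWitness[where f' = h'])
    show "\<forall>p\<in>D. h' (h p) = p"
    proof
      fix p assume p: "p \<in> D"
      obtain N b u v where p': "p = (N, b, u, v)" by (metis prod.collapse)
      have N: "N \<in> carrier_mat n k" and u: "u \<in> carrier_vec k" and v: "v \<in> carrier_vec n"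
        using p p' unfolding D_def Ps_def by auto
      show "h' (h p) = p" unfolding h_def h'_def p' using ex_bord[OF N u v, of b] by simp
    qed
    show "\<forall>M\<in>T. h (h' M) = M"
    proof
      fix M assume "M \<in> T"
      then have Mc: "M \<in> carrier_mat (Suc n) (Suc k)" unfolding T_def by simp
      show "h (h' M) = M" unfolding h_def h'_def using bord_ex[OF Mc] by simp
    qed
    show "h ` D \<subseteq> T"
    proof
      fix M assume "M \<in> h ` D"
      then obtain p where p0: "p \<in> D" and M0: "M = h p" by blast
      obtain N b u v where p': "p = (N, b, u, v)" by (metis prod.collapse)
      have p: "(N, b, u, v) \<in> D" using p0 p' by simp
      have M: "M = bord b u v N" using M0 p' unfolding h_def by simp
      have N: "N \<in> carrier_mat n k" and u: "u \<in> carrier_vec k" and v: "v \<in> carrier_vec n"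
        and rk: "mat_rank (bord b u v N) \<le> t" and bb: "b + tau (r - 1) N \<noteq> 0"
        using p unfolding D_def Ps_def Bs_def by auto
      show "M \<in> T" unfolding T_def M using bord_carrier[OF N] rk tau_bord[OF N r(1) r1] bb by auto
    qed
    show "h' ` T \<subseteq> D"
    proof
      fix p assume "p \<in> h' ` T"
      then obtain M where M: "M \<in> T" and p: "p = h' M" by auto
      have Mc: "M \<in> carrier_mat (Suc n) (Suc k)" using M unfolding T_def by auto
      note ec = ex_carrier[OF Mc]
      have eq: "bord (M $$ (0,0)) (exu M) (exv M) (exN M) = M" using bord_ex[OF Mc] .
      have "tau r M = M $$ (0,0) + tau (r - 1) (exN M)"
        using tau_bord[OF ec(1) r(1) r1, of "M $$ (0,0)" "exu M" "exv M"] eq by simp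
      then show "p \<in> D" using M ec eq unfolding p h'_def D_def Bs_def Ps_def T_def by auto
    qed
  qed
  then have "card T = card D" by (rule bij_betw_same_card[symmetric])
  have eachN: "(\<Sum>b\<in>Bs N. card (Ps N b)) = (CARD('a) - 1) * fcnt N t 1 +
      (if tau (r - 1) N \<noteq> 0 \<and> mat_rank N = t then CARD('a) ^ t else 0)"
    if N: "N \<in> carrier_mat n k" for N
  proof -
    have "(\<Sum>b\<in>Bs N. card (Ps N b)) = (\<Sum>b\<in>Bs N. fcnt N t b)" using fP[OF N] by simp
    then show ?thesis unfolding Bs_def using inner_sum[OF N] by simp
  qed
  have "card T = card D" by fact
  also have "\<dots> = (\<Sum>N\<in>(carrier_mat n k :: 'a mat set). (CARD('a) - 1) * fcnt N t 1 +
      (if tau (r - 1) N \<noteq> 0 \<and> mat_rank N = t then CARD('a) ^ t else 0))"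
    unfolding cD using eachN by (intro sum.cong) auto
  also have "\<dots> = (\<Sum>N \<in> (carrier_mat n k :: 'a mat set). (CARD('a) - 1) * fcnt N t 1) +
      (\<Sum>N \<in> (carrier_mat n k :: 'a mat set). if tau (r - 1) N \<noteq> 0 \<and> mat_rank N = t then CARD('a) ^ t else 0)"
    by (simp add: sum.distrib)
  also have "(\<Sum>N \<in> (carrier_mat n k :: 'a mat set). if tau (r - 1) N \<noteq> 0 \<and> mat_rank N = t then CARD('a) ^ t else 0)
      = CARD('a) ^ t * frak_w ty (r - 1) t n k"
  proof -
    have "(\<Sum>N \<in> (carrier_mat n k :: 'a mat set). if tau (r - 1) N \<noteq> 0 \<and> mat_rank N = t then CARD('a) ^ t else 0)
      = (\<Sum>N \<in> {N \<in> (carrier_mat n k :: 'a mat set). tau (r - 1) N \<noteq> 0 \<and> mat_rank N = t}. CARD('a) ^ t)"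
      by (rule sum.inter_filter[OF finite_carrier_mat, symmetric])
    also have "{N \<in> (carrier_mat n k :: 'a mat set). tau (r - 1) N \<noteq> 0 \<and> mat_rank N = t} =
        {M :: 'a mat. M \<in> carrier_mat n k \<and> mat_rank M = t \<and> tau (r - 1) M \<noteq> 0}" by auto
    finally show ?thesis unfolding frak_w_def by simp
  qed
  finally show ?thesis unfolding T_def .
qed


lemma rank0_tau:
  fixes M :: "'a::{finite,field} mat"
  assumes M: "M \<in> carrier_mat l m" and r: "r \<le> l" and lm: "l \<le> m" and rk: "mat_rank M = 0"
  shows "tau r M = 0"
proof -
  have c1: "card (colsp M) = 1" using card_colsp_rank[OF M] rk by simp
  have z: "0\<^sub>v l \<in> colsp M" using colsp_zero[OF M] .
  have ent: "M $$ (i, j) = 0" if i: "i < l" and j: "j < m" for i j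
  proof -
    have "M *\<^sub>v unit_vec m j \<in> colsp M" unfolding colsp_def using M by auto
    then have e: "M *\<^sub>v unit_vec m j = 0\<^sub>v l" using z c1 by (metis card_1_singletonE singletonD)
    have "(M *\<^sub>v unit_vec m j) $ i = row M i \<bullet> unit_vec m j" using M i by simp
    also have "\<dots> = M $$ (i, j)" using M i j by simp
    finally show ?thesis using e i by simp
  qed
  show ?thesis unfolding tau_def using ent r lm by (intro sum.neutral) auto
qed

lemma sum_frak:
  fixes ty :: "'a::{finite,field} itself"
  assumes r: "r \<le> l" and lm: "l \<le> m"
  shows "(\<Sum>s = 1..t. frak_w ty r s l m) = card {M :: 'a mat. M \<in> carrier_mat l m \<and> mat_rank M \<le> t \<and> tau r M \<noteq> 0}"
proof -
  define E where "E s = {M :: 'a mat. M \<in> carrier_mat l m \<and> mat_rank M = s \<and> tau r M \<noteq> 0}" for s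
  have fin: "finite (E s)" for s
    by (rule finite_subset[OF _ finite_carrier_mat[of l m]]) (auto simp: E_def)
  have U: "{M :: 'a mat. M \<in> carrier_mat l m \<and> mat_rank M \<le> t \<and> tau r M \<noteq> 0} = (\<Union>s\<in>{1..t}. E s)"
  proof (intro equalityI subsetI)
    fix M assume "M \<in> {M :: 'a mat. M \<in> carrier_mat l m \<and> mat_rank M \<le> t \<and> tau r M \<noteq> 0}"
    then have M: "M \<in> carrier_mat l m" "mat_rank M \<le> t" "tau r M \<noteq> 0" by auto
    have "mat_rank M \<noteq> 0" using rank0_tau[OF M(1) r lm] M(3) by auto
    then show "M \<in> (\<Union>s\<in>{1..t}. E s)" using M unfolding E_def by auto
  qed (auto simp: E_def)
  have "card (\<Union>s\<in>{1..t}. E s) = (\<Sum>s\<in>{1..t}. card (E s))"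
    apply (rule card_UN_disjoint)
      apply simp
     apply (simp add: fin)
    apply (auto simp: E_def)
    done
  then show ?thesis unfolding U frak_w_def E_def by simp
qed

lemma w_hat_eq:
  fixes ty :: "'a::{finite,field} itself"
  assumes r: "r \<le> l" and lm: "l \<le> m"
  shows "w_hat ty r t l m = real (card {M :: 'a mat. M \<in> carrier_mat l m \<and> mat_rank M \<le> t \<and> tau r M \<noteq> 0})
     / (real CARD('a) - 1)"
proof -
  have s: "(\<Sum>s = 1..t. real (frak_w ty r s l m)) =
      real (card {M :: 'a mat. M \<in> carrier_mat l m \<and> mat_rank M \<le> t \<and> tau r M \<noteq> 0})"
    unfolding sum_frak[OF r lm, of ty t, symmetric] by (rule of_nat_sum[symmetric])
  show ?thesis
    unfolding w_hat_def frak_w_hat_def sum_divide_distrib[symmetric] s ..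
qed

theorem mainTheorem5:
  fixes ty :: "'a::{finite,field} itself"
    and s r t l m :: nat
  assumes "1 \<le> s" "s \<le> r" "r \<le> l" "l \<le> m" "1 \<le> t" "t < l"
  shows "w_hat ty r t l m - w_hat ty s t l m =
           real (card (UNIV :: 'a set)) ^ t * (frak_w_hat ty (r - 1) t (l - 1) (m - 1)
                                - frak_w_hat ty (s - 1) t (l - 1) (m - 1))
         \<and> w_hat ty r t l m - w_hat ty 1 t l m =
           real (card (UNIV :: 'a set)) ^ t * frak_w_hat ty (r - 1) t (l - 1) (m - 1)"
proof -
  obtain n where n: "l = Suc n" using assms by (cases l) auto
  obtain k where k: "m = Suc k" using assms by (cases m) auto
  have nk: "n \<le> k" using assms n k by simp
  let ?q = "real CARD('a)"
  have q: "?q - 1 \<noteq> 0" using card_ge2[where 'a='a] by simp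
  define X where "X = (\<Sum>N \<in> (carrier_mat n k :: 'a mat set). (CARD('a) - 1) * fcnt N t 1)"
  have gen: "w_hat ty r' t l m = (real X + ?q ^ t * real (frak_w ty (r' - 1) t n k)) / (?q - 1)"
    if "1 \<le> r'" "r' \<le> l" for r'
  proof -
    have "w_hat ty r' t l m = real (card {M :: 'a mat. M \<in> carrier_mat l m \<and> mat_rank M \<le> t \<and> tau r' M \<noteq> 0})
       / (?q - 1)" using w_hat_eq[OF that(2) assms(4)] .
    also have "card {M :: 'a mat. M \<in> carrier_mat l m \<and> mat_rank M \<le> t \<and> tau r' M \<noteq> 0}
        = X + CARD('a) ^ t * frak_w ty (r' - 1) t n k"
      unfolding X_def n k using A_formula[where ty=ty and r=r' and n=n and k=k and t=t] that n nk by simp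
    finally show ?thesis by simp
  qed
  have f0: "frak_w ty 0 t n k = 0" unfolding frak_w_def tau_def by simp
  have main: "w_hat ty r' t l m - w_hat ty s' t l m =
      ?q ^ t * (frak_w_hat ty (r' - 1) t (l - 1) (m - 1) - frak_w_hat ty (s' - 1) t (l - 1) (m - 1))"
    if "1 \<le> r'" "r' \<le> l" "1 \<le> s'" "s' \<le> l" for r' s'
  proof -
    have "w_hat ty r' t l m - w_hat ty s' t l m =
        (?q ^ t * real (frak_w ty (r' - 1) t n k) - ?q ^ t * real (frak_w ty (s' - 1) t n k)) / (?q - 1)"
      unfolding gen[OF that(1,2)] gen[OF that(3,4)] by (simp add: diff_divide_distrib[symmetric])
    also have "\<dots> = ?q ^ t * (real (frak_w ty (r' - 1) t n k) / (?q - 1) - real (frak_w ty (s' - 1) t n k) / (?q - 1))"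
      by (simp add: diff_divide_distrib right_diff_distrib)
    finally show ?thesis unfolding frak_w_hat_def using n k by simp
  qed
  show ?thesis
  proof
    show "w_hat ty r t l m - w_hat ty s t l m =
           real (card (UNIV :: 'a set)) ^ t * (frak_w_hat ty (r - 1) t (l - 1) (m - 1)
                                - frak_w_hat ty (s - 1) t (l - 1) (m - 1))"
      using main[of r s] assms by simp
    have "frak_w_hat ty (1 - 1) t (l - 1) (m - 1) = 0" unfolding frak_w_hat_def n k using f0 by simp
    then show "w_hat ty r t l m - w_hat ty 1 t l m =
           real (card (UNIV :: 'a set)) ^ t * frak_w_hat ty (r - 1) t (l - 1) (m - 1)"
      using main[of r 1] assms by simp
  qed
qed

end
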